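(* Let $0<\alpha<\pi/4$, $\beta=\pi/4$, and let $F,G_1,G_2$, $X_{\pm\pm}$, $s_{\max}$, $v$ be as in the context. Define $\bar M(s,\alpha)=e^{v(s)X_{++}}e^{v(s)X_{-+}}e^{v(s)X_{--}}e^{v(s)X_{+-}}$ and $\theta(\alpha)=\arcsin\left(\frac{-2\sqrt2\sin\alpha\cos\alpha}{1+\cos^2\alpha}\right)$. Then $$\bar M(0,\alpha)=\bar M(s_{\max},\alpha)=\begin{pmatrix}1&0&0\\0&\cos4\theta(\alpha)&\sin4\theta(\alpha)\\0&-\sin4\theta(\alpha)&\cos4\theta(\alpha)\end{pmatrix}.$$
   Context: $F=\cos\alpha\begin{pmatrix}0&-1&0\\1&0&0\\0&0&0\end{pmatrix}$, $G_1=\sin\alpha\sin\beta\begin{pmatrix}0&0&0\\0&0&-1\\0&1&0\end{pmatrix}$, $G_2=\sin\alpha\cos\beta\begin{pmatrix}0&0&-1\\0&0&0\\1&0&0\end{pmatrix}$, and $X_{ab}=F+aG_1+bG_2$ for $a,b\in\{+1,-1\}$. $s_{\max}=\arccos\left(-\frac{\sin^2\alpha}{1+\cos^2\alpha}\right)$. For $s\in[0,s_{\max}]$, $v(s)=\arccos\left[\frac{d-A(s)-B(s)-C(s)}{e-A(s)+B(s)}\right]$ with $A(s)=8\cos\alpha\sin^2\alpha\sin s$, $B(s)=2\sin^2(2\alpha)\cos s$, $C(s)=4\sin^4\alpha\cos(2s)$, $d=\sin^2(2\alpha)$, $e=5+2\cos2\alpha+\cos4\alpha$; this is the duration of interior bang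 arcs of normal extremals of $\dot x=(F+u_1G_1+u_2G_2)x$ on $S^2$ starting from $(0,0,1)$ whose first bang arc has duration $s$. *)

theory Defs
  imports "HOL-Analysis.Analysis"
begin

fun matpow :: "real^'n^'n \<Rightarrow> nat \<Rightarrow> real^'n^'n" where
  "matpow A 0 = mat 1"
| "matpow A (Suc n) = A ** matpow A n"

definition mexp :: "real^'n^'n \<Rightarrow> real^'n^'n" where
  "mexp A = (\<Sum>n. (1 / fact n) *\<^sub>R matpow A n)"

definition Fm :: "real \<Rightarrow> real^3^3" where
  "Fm \<alpha> = cos \<alpha> *\<^sub>R vector [vector [0, -1, 0], vector [1, 0, 0], vector [0, 0, 0]]"

definition G1m :: "real \<Rightarrow> real \<Rightarrow> real^3^3" where
  "G1m \<alpha> \<beta> = (sin \<alpha> * sin \<beta>) *\<^sub>R vector [vector [0, 0, 0], vector [0, 0, -1], vector [0, 1, 0]]"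

definition G2m :: "real \<Rightarrow> real \<Rightarrow> real^3^3" where
  "G2m \<alpha> \<beta> = (sin \<alpha> * cos \<beta>) *\<^sub>R vector [vector [0, 0, -1], vector [0, 0, 0], vector [1, 0, 0]]"

definition Xm :: "real \<Rightarrow> real \<Rightarrow> real \<Rightarrow> real \<Rightarrow> real^3^3" where
  "Xm a b \<alpha> \<beta> = Fm \<alpha> + a *\<^sub>R G1m \<alpha> \<beta> + b *\<^sub>R G2m \<alpha> \<beta>"

definition smax :: "real \<Rightarrow> real" where
  "smax \<alpha> = arccos (- (sin \<alpha>)\<^sup>2 / (1 + (cos \<alpha>)\<^sup>2))"

definition vdur :: "real \<Rightarrow> real \<Rightarrow> real" where
  "vdur \<alpha> s =
     (let A = 8 * cos \<alpha> * (sin \<alpha>)\<^sup>2 * sin s;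
          B = 2 * (sin (2 * \<alpha>))\<^sup>2 * cos s;
          C = 4 * (sin \<alpha>) ^ 4 * cos (2 * s);
          d = (sin (2 * \<alpha>))\<^sup>2;
          e = 5 + 2 * cos (2 * \<alpha>) + cos (4 * \<alpha>)
      in arccos ((d - A - B - C) / (e - A + B)))"

definition Mbar :: "real \<Rightarrow> real \<Rightarrow> real^3^3" where
  "Mbar s \<alpha> = (let v = vdur \<alpha> s; \<beta> = pi / 4 in
      mexp (v *\<^sub>R Xm 1 1 \<alpha> \<beta>) ** mexp (v *\<^sub>R Xm (-1) 1 \<alpha> \<beta>)
      ** mexp (v *\<^sub>R Xm (-1) (-1) \<alpha> \<beta>) ** mexp (v *\<^sub>R Xm 1 (-1) \<alpha> \<beta>))"

definition theta :: "real \<Rightarrow> real" where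
  "theta \<alpha> = arcsin (- 2 * sqrt 2 * sin \<alpha> * cos \<alpha> / (1 + (cos \<alpha>)\<^sup>2))"

definition Rx :: "real \<Rightarrow> real^3^3" where
  "Rx t = vector [vector [1, 0, 0], vector [0, cos t, sin t], vector [0, - sin t, cos t]]"

end

theory Submission
  imports Defs
begin

definition mk :: "real \<Rightarrow> real \<Rightarrow> real \<Rightarrow> real \<Rightarrow> real \<Rightarrow> real \<Rightarrow> real \<Rightarrow> real \<Rightarrow> real \<Rightarrow> real^3^3" where
  "mk a b c d e f g h i = vector [vector [a,b,c], vector [d,e,f], vector [g,h,i]]"

lemma mk_mult: "mk a1 b1 c1 d1 e1 f1 g1 h1 i1 ** mk a2 b2 c2 d2 e2 f2 g2 h2 i2 =
  mk (a1*a2+b1*d2+c1*g2) (a1*b2+b1*e2+c1*h2) (a1*c2+b1*f2+c1*i2)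
     (d1*a2+e1*d2+f1*g2) (d1*b2+e1*e2+f1*h2) (d1*c2+e1*f2+f1*i2)
     (g1*a2+h1*d2+i1*g2) (g1*b2+h1*e2+i1*h2) (g1*c2+h1*f2+i1*i2)"
  by (simp add: mk_def matrix_matrix_mult_def vec_eq_iff forall_3 sum_3)

lemma mk_add: "mk a1 b1 c1 d1 e1 f1 g1 h1 i1 + mk a2 b2 c2 d2 e2 f2 g2 h2 i2 =
  mk (a1+a2) (b1+b2) (c1+c2) (d1+d2) (e1+e2) (f1+f2) (g1+g2) (h1+h2) (i1+i2)"
  by (simp add: mk_def vec_eq_iff forall_3)

lemma mk_scale: "r *\<^sub>R mk a b c d e f g h i = mk (r*a) (r*b) (r*c) (r*d) (r*e) (r*f) (r*g) (r*h) (r*i)"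
  by (simp add: mk_def vec_eq_iff forall_3)

lemma mk_neg: "- mk a b c d e f g h i = mk (-a) (-b) (-c) (-d) (-e) (-f) (-g) (-h) (-i)"
  by (simp add: mk_def vec_eq_iff forall_3)

lemma mk_eq: "mk a1 b1 c1 d1 e1 f1 g1 h1 i1 = mk a2 b2 c2 d2 e2 f2 g2 h2 i2 \<longleftrightarrow>
  a1=a2 \<and> b1=b2 \<and> c1=c2 \<and> d1=d2 \<and> e1=e2 \<and> f1=f2 \<and> g1=g2 \<and> h1=h2 \<and> i1=i2"
  by (simp add: mk_def vec_eq_iff forall_3)

lemma mat1_mk: "(mat 1 :: real^3^3) = mk 1 0 0 0 1 0 0 0 1"
  by (simp add: mk_def vec_eq_iff forall_3 mat_def)

definition Pm :: "real \<Rightarrow> real \<Rightarrow> real \<Rightarrow> real \<Rightarrow> real^3^3" where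
  "Pm a b c t = (let X = mk 0 (-c) (-b*t) c 0 (-a*t) (b*t) (a*t) 0 in
     (1+c^2) *\<^sub>R mat 1 + (2*c) *\<^sub>R X + 2 *\<^sub>R (X ** X))"

lemma prod_poly:
  assumes "c^2 + 2*t^2 = 1"
  shows "Pm 1 1 c t ** Pm (-1) 1 c t ** Pm (-1) (-1) c t ** Pm 1 (-1) c t =
    (let D = 1 + c^2; C = 3*c^2-1; S = -4*t*c in
     mk (D^4) 0 0 0 (D^4 - 8*S^2*C^2) (4*S*C*(C^2-S^2)) 0 (-(4*S*C*(C^2-S^2))) (D^4 - 8*S^2*C^2))"
  unfolding Pm_def Let_def mat1_mk mk_mult mk_add mk_scale mk_eq
  apply (intro conjI)
  apply (simp_all add: algebra_simps)
  using assms by algebra+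
lemma matpow_scale: "matpow (v *\<^sub>R K) n = (v^n) *\<^sub>R matpow K n"
  by (induction n) (simp_all add: matrix_scalar_ac scalar_matrix_assoc[symmetric])

lemma matpow_oe:
  fixes K :: "real^'n^'n"
  assumes "K ** (K ** K) = - K"
  shows "matpow K (2*m+1) = (-1)^m *\<^sub>R K \<and> matpow K (2*m+2) = (-1)^m *\<^sub>R (K ** K)"
proof (induction m)
  case 0 then show ?case by simp
next
  case (Suc m)
  have i2: "matpow K (2*m+2) = (-1)^m *\<^sub>R (K ** K)" using Suc by blast
  have a: "2*Suc m+1 = Suc (2*m+2)" by simp
  have e1: "matpow K (2*Suc m+1) = (-1)^Suc m *\<^sub>R K"
  proof -
    have "matpow K (2*Suc m+1) = K ** matpow K (2*m+2)" by (simp only: a matpow.simps)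
    also have "\<dots> = (-1)^m *\<^sub>R (K ** (K ** K))" by (simp only: i2 matrix_scalar_ac scalar_matrix_assoc[symmetric])
    also have "\<dots> = (-1)^Suc m *\<^sub>R K" using assms by simp
    finally show ?thesis .
  qed
  have b: "2*Suc m+2 = Suc (2*Suc m+1)" by simp
  have "matpow K (2*Suc m+2) = K ** matpow K (2*Suc m+1)" by (simp only: b matpow.simps)
  also have "\<dots> = (-1)^Suc m *\<^sub>R (K ** K)" by (simp only: e1 matrix_scalar_ac scalar_matrix_assoc[symmetric])
  finally show ?case using e1 by blast
qed

lemma term_eq:
  fixes K :: "real^'n^'n"
  assumes "K ** (K ** K) = - K"
  shows "(1 / fact n) *\<^sub>R matpow (v *\<^sub>R K) n =
    (if n = 0 then mat 1 + K ** K else 0) + (sin_coeff n * v^n) *\<^sub>R K - (cos_coeff n * v^n) *\<^sub>R (K ** K)"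
proof -
  have base: "(1 / fact n) *\<^sub>R matpow (v *\<^sub>R K) n = (v^n / fact n) *\<^sub>R matpow K n"
    by (simp only: matpow_scale scaleR_scaleR) simp
  show ?thesis
  proof (cases "n = 0")
    case True then show ?thesis by (simp add: cos_coeff_def sin_coeff_def)
  next
    case False
    show ?thesis
    proof (cases "even n")
      case True
      then obtain k where k: "n = 2*k" by blast
      obtain m where "k = Suc m" using False k by (cases k) auto
      then have m: "n = 2*m+2" using k by simp
      have mp: "matpow K n = (-1)^m *\<^sub>R (K ** K)" using matpow_oe[OF assms, of m] m by blast
      have "(-1::real)^(n div 2) = - ((-1)^m)" using m by simp
      then have cc: "cos_coeff n = - ((-1)^m / fact n)" using True by (simp add: cos_coeff_def)
      have sc: "sin_coeff n = 0" using True by (simp add: sin_coeff_def)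
      show ?thesis unfolding base mp cc sc using False
        by (simp add: scaleR_scaleR)
    next
      case odd: False
      then obtain m where m: "n = 2*m+1" using oddE by blast
      have mp: "matpow K n = (-1)^m *\<^sub>R K" using matpow_oe[OF assms, of m] m by blast
      have "(n - 1) div 2 = m" using m by simp
      then have sc: "sin_coeff n = (-1)^m / fact n" using odd by (simp add: sin_coeff_def)
      have cc: "cos_coeff n = 0" using odd by (simp add: cos_coeff_def)
      show ?thesis unfolding base mp cc sc using False
        by (simp add: scaleR_scaleR)
    qed
  qed
qed

lemma rodrigues:
  fixes K :: "real^'n^'n"
  assumes "K ** (K ** K) = - K"
  shows "mexp (v *\<^sub>R K) = mat 1 + sin v *\<^sub>R K + (1 - cos v) *\<^sub>R (K ** K)"
proof -
  have s1: "(\<lambda>n. (if n = 0 then mat 1 + K ** K else 0)) sums (mat 1 + K ** K)"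
    using sums_single[of 0 "\<lambda>_. mat 1 + K ** K"] by simp
  have s2: "(\<lambda>n. (sin_coeff n * v^n) *\<^sub>R K) sums (sin v *\<^sub>R K)"
    using sums_scaleR_left[OF sin_converges[of v]] by simp
  have s3: "(\<lambda>n. (cos_coeff n * v^n) *\<^sub>R (K ** K)) sums (cos v *\<^sub>R (K ** K))"
    using sums_scaleR_left[OF cos_converges[of v]] by simp
  have "(\<lambda>n. (1 / fact n) *\<^sub>R matpow (v *\<^sub>R K) n) sums
      ((mat 1 + K ** K) + sin v *\<^sub>R K - cos v *\<^sub>R (K ** K))"
    unfolding term_eq[OF assms] by (intro sums_add sums_diff s1 s2 s3)
  then show ?thesis unfolding mexp_def by (simp add: sums_unique[symmetric] algebra_simps)
qed

lemma basic_facts: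
  fixes \<alpha> :: real
  assumes "0 < \<alpha>" and "\<alpha> < pi / 4"
  shows "0 < cos \<alpha>" "0 < sin \<alpha>" "3 * (cos \<alpha>)^2 - 1 > 0" "(sin \<alpha>)^2 + (cos \<alpha>)^2 = 1"
proof -
  show c: "0 < cos \<alpha>" using assms by (intro cos_gt_zero) auto
  show "0 < sin \<alpha>" using assms by (intro sin_gt_zero) auto
  show "(sin \<alpha>)^2 + (cos \<alpha>)^2 = 1" by simp
  have "cos (pi/4) < cos \<alpha>" using assms by (intro cos_monotone_0_pi) auto
  then have "sqrt 2 / 2 < cos \<alpha>" by (simp add: cos_45)
  then have "(sqrt 2 / 2)^2 < (cos \<alpha>)^2" by (intro power_strict_mono) auto
  then have "1/2 < (cos \<alpha>)^2" by (simp add: power_divide)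
  then show "3 * (cos \<alpha>)^2 - 1 > 0" by simp
qed

lemma X_mk:
  "Xm a b \<alpha> (pi/4) = (let c = cos \<alpha>; t = sin \<alpha> * (sqrt 2 / 2) in
     mk 0 (-c) (-b*t) c 0 (-a*t) (b*t) (a*t) 0)"
  by (simp add: Let_def Xm_def Fm_def G1m_def G2m_def mk_def vec_eq_iff forall_3 sin_45 cos_45)

lemma X_cube:
  assumes "c^2 + 2*t^2 = 1" "a^2 = 1" "b^2 = 1"
  shows "mk 0 (-c) (-b*t) c 0 (-a*t) (b*t) (a*t) 0 ** (mk 0 (-c) (-b*t) c 0 (-a*t) (b*t) (a*t) 0 ** mk 0 (-c) (-b*t) c 0 (-a*t) (b*t) (a*t) 0)
    = - mk 0 (-c) (-b*t) c 0 (-a*t) (b*t) (a*t) 0"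
  unfolding mk_mult mk_neg mk_eq
  apply (simp add: algebra_simps)
  using assms by algebra+

lemma exp_X:
  assumes "c^2 + 2*t^2 = 1" "a^2 = 1" "b^2 = 1" "s^2 + c^2 = 1"
    and "sin v = 2*c/(1+c^2)" "cos v = - (s^2) / (1+c^2)"
  shows "mexp (v *\<^sub>R mk 0 (-c) (-b*t) c 0 (-a*t) (b*t) (a*t) 0) = (1/(1+c^2)) *\<^sub>R Pm a b c t"
proof -
  define X where "X = mk 0 (-c) (-b*t) c 0 (-a*t) (b*t) (a*t) 0"
  have D: "1 + c^2 \<noteq> 0" by (smt (verit) zero_le_power2)
  have e: "mexp (v *\<^sub>R X) = mat 1 + sin v *\<^sub>R X + (1 - cos v) *\<^sub>R (X ** X)"
    unfolding X_def by (rule rodrigues, rule X_cube[OF assms(1-3)])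
  have k1: "1 - cos v = 2 / (1+c^2)" using assms(4,6) D by (simp add: field_simps)
  show ?thesis unfolding X_def[symmetric] e Pm_def Let_def k1 assms(5)
    using D by (simp add: scaleR_add_right scaleR_scaleR)
qed

lemma theta_facts:
  fixes \<alpha> :: real
  assumes "0 < \<alpha>" and "\<alpha> < pi / 4"
  defines "c \<equiv> cos \<alpha>" and "t \<equiv> sin \<alpha> * (sqrt 2 / 2)"
  shows "sin (theta \<alpha>) = (-4*t*c) / (1+c^2) \<and> cos (theta \<alpha>) = (3*c^2-1)/(1+c^2)"
proof -
  note bf = basic_facts[OF assms(1,2), folded c_def]
  have t2: "c^2 + 2*t^2 = 1" using bf(4) unfolding t_def by (simp add: power_mult_distrib power_divide)
  have D: "1 + c^2 > 0" by (simp add: add_pos_nonneg)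
  have arg: "- 2 * sqrt 2 * sin \<alpha> * cos \<alpha> / (1 + (cos \<alpha>)\<^sup>2) = (-4*t*c) / (1+c^2)"
    unfolding t_def c_def by simp
  have sq: "((-4*t*c) / (1+c^2))^2 + ((3*c^2-1)/(1+c^2))^2 = 1"
  proof -
    have "(-4*t*c)^2 + (3*c^2-1)^2 = (1+c^2)^2" using t2 by algebra
    then show ?thesis using D by (simp add: power_divide add_divide_distrib[symmetric])
  qed
  have b1: "((-4*t*c) / (1+c^2))^2 \<le> 1" using sq by (smt (verit) zero_le_power2)
  then have b3: "\<bar>(-4*t*c) / (1+c^2)\<bar> \<le> 1" using abs_square_le_1 by blast
  have b2: "-1 \<le> (-4*t*c) / (1+c^2)" "(-4*t*c) / (1+c^2) \<le> 1"
    using abs_le_D1[OF b3] abs_le_D2[OF b3] by linarith+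
  have s: "sin (theta \<alpha>) = (-4*t*c) / (1+c^2)" unfolding theta_def arg using b2 by simp
  have "cos (theta \<alpha>) = sqrt (1 - ((-4*t*c) / (1+c^2))^2)" unfolding theta_def arg using b2 by (simp add: cos_arcsin)
  also have "1 - ((-4*t*c) / (1+c^2))^2 = ((3*c^2-1)/(1+c^2))^2" using sq by linarith
  also have "sqrt (((3*c^2-1)/(1+c^2))^2) = (3*c^2-1)/(1+c^2)" using bf(3) D by simp
  finally show ?thesis using s by blast
qed

lemma Rx_mk:
  assumes "sin th = S/D" "cos th = C/D" "D \<noteq> 0"
  shows "Rx (4*th) = (1/D^4) *\<^sub>R mk (D^4) 0 0 0 (D^4 - 8*S^2*C^2) (4*S*C*(C^2-S^2)) 0 (-(4*S*C*(C^2-S^2))) (D^4 - 8*S^2*C^2)"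
proof -
  have c4: "cos (4*th) = (D^4 - 8*S^2*C^2)/D^4"
    if "cos (4*th) = 1 - 8 * (sin th)^2 * (cos th)^2"
    unfolding that assms(1,2) using assms(3) by (simp add: field_simps power2_eq_square power4_eq_xxxx)
  have c4': "cos (4*th) = 1 - 8 * (sin th)^2 * (cos th)^2"
    using cos_double_sin[of "2*th"] sin_double[of th] by (simp add: power_mult_distrib)
  have s4: "sin (4*th) = (4*S*C*(C^2-S^2))/D^4"
    if "sin (4*th) = 4 * sin th * cos th * ((cos th)^2 - (sin th)^2)"
    unfolding that assms(1,2) using assms(3) by (simp add: field_simps power2_eq_square power4_eq_xxxx)
  have s4': "sin (4*th) = 4 * sin th * cos th * ((cos th)^2 - (sin th)^2)"
    using sin_double[of "2*th"] sin_double[of th] cos_double[of th] by simp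
  show ?thesis unfolding Rx_def mk_scale c4[OF c4'] s4[OF s4']
    using assms(3) by (simp add: mk_def)
qed

lemma main:
  fixes \<alpha> s0 :: real
  assumes "0 < \<alpha>" and "\<alpha> < pi / 4"
    and v: "vdur \<alpha> s0 = arccos (- (sin \<alpha>)\<^sup>2 / (1 + (cos \<alpha>)^2))"
  shows "Mbar s0 \<alpha> = Rx (4 * theta \<alpha>)"
proof -
  define c where "c = cos \<alpha>"
  define s where "s = sin \<alpha>"
  define t where "t = sin \<alpha> * (sqrt 2 / 2)"
  note bf = basic_facts[OF assms(1,2), folded c_def s_def]
  have t2: "c^2 + 2*t^2 = 1" using bf(4) unfolding t_def s_def by (simp add: power_mult_distrib power_divide)
  have D: "1 + c^2 > 0" by (simp add: add_pos_nonneg)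
  define w where "w = - (s^2) / (1 + c^2)"
  have sD: "s^2 \<le> 1 + c^2" using bf(4) zero_le_power2[of c] by linarith
  have wb: "-1 \<le> w" "w \<le> 1" 
  proof -
    have q: "s^2/(1+c^2) \<le> 1" using sD D by (simp add: divide_le_eq)
    have q2: "0 \<le> s^2/(1+c^2)" using D by simp
    show "-1 \<le> w" "w \<le> 1" unfolding w_def minus_divide_left[symmetric] using q q2 by linarith+
  qed
  have cv: "cos (vdur \<alpha> s0) = - (s^2)/(1+c^2)" unfolding v c_def[symmetric] s_def[symmetric] w_def[symmetric]
    using wb by simp
  have "sin (vdur \<alpha> s0) = sqrt (1 - w^2)" unfolding v c_def[symmetric] s_def[symmetric] w_def[symmetric]
    using wb by (simp add: sin_arccos)
  also have "1 - w^2 = (2*c/(1+c^2))^2"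
  proof -
    have p: "(s^2)^2 + (2*c)^2 = (1+c^2)^2" using bf(4) by algebra
    have "w^2 + (2*c/(1+c^2))^2 = 1" unfolding w_def using p D
      by (simp add: power_divide add_divide_distrib[symmetric])
    then show ?thesis by linarith
  qed
  finally have sv: "sin (vdur \<alpha> s0) = 2*c/(1+c^2)" using bf(1) D by simp
  have ex: "mexp (vdur \<alpha> s0 *\<^sub>R Xm a b \<alpha> (pi/4)) = (1/(1+c^2)) *\<^sub>R Pm a b c t"
    if "a^2 = 1" "b^2 = 1" for a b
    unfolding X_mk Let_def c_def[symmetric] t_def[symmetric]
    by (rule exp_X[OF t2 that bf(4) sv cv])
  have "Mbar s0 \<alpha> = ((1/(1+c^2)) *\<^sub>R Pm 1 1 c t) ** ((1/(1+c^2)) *\<^sub>R Pm (-1) 1 c t)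
     ** ((1/(1+c^2)) *\<^sub>R Pm (-1) (-1) c t) ** ((1/(1+c^2)) *\<^sub>R Pm 1 (-1) c t)"
    unfolding Mbar_def Let_def by (simp add: ex)
  also have "\<dots> = (1/(1+c^2))^4 *\<^sub>R (Pm 1 1 c t ** Pm (-1) 1 c t ** Pm (-1) (-1) c t ** Pm 1 (-1) c t)"
    by (simp add: matrix_scalar_ac scalar_matrix_assoc[symmetric] power4_eq_xxxx)
  also have "\<dots> = Rx (4 * theta \<alpha>)"
    unfolding prod_poly[OF t2] Let_def
    using Rx_mk[of "theta \<alpha>" "-4*t*c" "1+c^2" "3*c^2-1"] theta_facts[OF assms(1,2)] D
    unfolding c_def t_def by (simp add: power_one_over)
  finally show ?thesis .
qed

lemma vdur0:
  fixes \<alpha> :: real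
  assumes "0 < \<alpha>" and "\<alpha> < pi / 4"
  shows "vdur \<alpha> 0 = arccos (- (sin \<alpha>)\<^sup>2 / (1 + (cos \<alpha>)^2))"
proof -
  have c4: "cos (4*\<alpha>) = 2 * (cos (2*\<alpha>))^2 - 1" using cos_double_cos[of "2*\<alpha>"] by simp
  have eq: "(sin \<alpha>)^2 + (cos \<alpha>)^2 = 1" by simp
  have D: "1 + (cos \<alpha>)^2 > 0" by (simp add: add_pos_nonneg)
  have den: "5 + 2 * cos (2 * \<alpha>) + cos (4 * \<alpha>) + 2 * (sin (2 * \<alpha>))\<^sup>2 = 4 * (1 + (cos \<alpha>)^2)"
    unfolding c4 cos_double sin_double using eq by algebra
  have num: "(sin (2 * \<alpha>))\<^sup>2 - 2 * (sin (2 * \<alpha>))\<^sup>2 - 4 * (sin \<alpha>)^4 = - 4 * (sin \<alpha>)^2"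
    unfolding sin_double using eq by algebra
  show ?thesis
  proof -
    have "4 + 4*(cos \<alpha>)^2 \<noteq> 0" "1 + (cos \<alpha>)^2 \<noteq> 0" using D by linarith+
    then have "4 * (sin \<alpha>)^2 / (4 + 4*(cos \<alpha>)^2) = (sin \<alpha>)^2/(1+(cos \<alpha>)^2)"
      by (simp add: divide_simps)
    then show ?thesis
      unfolding vdur_def Let_def sin_zero cos_zero mult_zero_right mult_1_right diff_0_right num den
      by simp
  qed
qed

lemma vdur_smax:
  fixes \<alpha> :: real
  assumes "0 < \<alpha>" and "\<alpha> < pi / 4"
  shows "vdur \<alpha> (smax \<alpha>) = arccos (- (sin \<alpha>)\<^sup>2 / (1 + (cos \<alpha>)^2))"
proof -
  define c where "c = cos \<alpha>"
  define s where "s = sin \<alpha>"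
  note bf = basic_facts[OF assms(1,2), folded c_def s_def]
  have D: "1 + c^2 > 0" by (simp add: add_pos_nonneg)
  define w where "w = - (s^2) / (1 + c^2)"
  have sD: "s^2 \<le> 1 + c^2" using bf(4) zero_le_power2[of c] by linarith
  have wb: "-1 \<le> w" "w \<le> 1" 
  proof -
    have q: "s^2/(1+c^2) \<le> 1" using sD D by (simp add: divide_le_eq)
    have q2: "0 \<le> s^2/(1+c^2)" using D by simp
    show "-1 \<le> w" "w \<le> 1" unfolding w_def minus_divide_left[symmetric] using q q2 by linarith+
  qed
  have sm: "smax \<alpha> = arccos w" unfolding smax_def w_def c_def s_def by simp
  have cs: "cos (smax \<alpha>) = w" unfolding sm using wb by simp
  have "sin (smax \<alpha>) = sqrt (1 - w^2)" unfolding sm using wb by (simp add: sin_arccos)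
  also have "1 - w^2 = (2*c/(1+c^2))^2"
  proof -
    have p: "(s^2)^2 + (2*c)^2 = (1+c^2)^2" using bf(4) by algebra
    have "w^2 + (2*c/(1+c^2))^2 = 1" unfolding w_def using p D
      by (simp add: power_divide add_divide_distrib[symmetric])
    then show ?thesis by linarith
  qed
  finally have ss: "sin (smax \<alpha>) = 2*c/(1+c^2)" using bf(1) D by simp
  have c2s: "cos (2 * smax \<alpha>) = 2*w^2 - 1" using cos_double_cos[of "smax \<alpha>"] cs by simp
  have c4: "cos (4*\<alpha>) = 2 * (cos (2*\<alpha>))^2 - 1" using cos_double_cos[of "2*\<alpha>"] by simp
  have s2a: "sin (2*\<alpha>) = 2 * s * c" unfolding s_def c_def by (simp add: sin_double)
  have c2a: "cos (2*\<alpha>) = c^2 - s^2" unfolding s_def c_def by (simp add: cos_double)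
  define E where "E = 5 + 2 * cos (2 * \<alpha>) + cos (4 * \<alpha>) - 8 * cos \<alpha> * (sin \<alpha>)\<^sup>2 * sin (smax \<alpha>)
     + 2 * (sin (2 * \<alpha>))\<^sup>2 * cos (smax \<alpha>)"
  define N where "N = (sin (2 * \<alpha>))\<^sup>2 - 8 * cos \<alpha> * (sin \<alpha>)\<^sup>2 * sin (smax \<alpha>)
     - 2 * (sin (2 * \<alpha>))\<^sup>2 * cos (smax \<alpha>) - 4 * sin \<alpha> ^ 4 * cos (2 * smax \<alpha>)"
  define q where "q = 1 / (1 + c^2)"
  have hq: "(1 + c^2) * q = 1" unfolding q_def using D by simp
  have ssq: "sin (smax \<alpha>) = 2 * c * q" unfolding ss q_def by simp
  have wq: "w = - (s^2) * q" unfolding w_def q_def by simp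
  have E: "E = 4 * (3*c^2-1)^2 * q"
    unfolding E_def c4 c2a s2a ssq cs wq c_def[symmetric] s_def[symmetric] using hq bf(4)
    by algebra
  have N: "N = w * E"
    unfolding E N_def c2s c4 c2a s2a ssq cs wq c_def[symmetric] s_def[symmetric] using hq bf(4)
    by algebra
  have "q \<noteq> 0" using hq by auto
  then have "E \<noteq> 0" unfolding E using bf(3) by simp
  then have "N / E = w" using N by simp
  then show ?thesis unfolding vdur_def Let_def w_def s_def c_def
    by (simp add: N_def E_def)
qed

theorem corollary6:
  fixes \<alpha> :: real
  assumes "0 < \<alpha>" and "\<alpha> < pi / 4"
  shows "Mbar 0 \<alpha> = Rx (4 * theta \<alpha>) \<and> Mbar (smax \<alpha>) \<alpha> = Rx (4 * theta \<alpha>)"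
  using main[OF assms vdur0[OF assms]] main[OF assms vdur_smax[OF assms]] by blast

end
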